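(* Let $S$ be a semigroup such that $E(S)$ is a semilattice. Then the $\mathcal{L}^*$-classes of idempotents form a meet semilattice under the partial order on $S/\mathcal{L}^*$ induced by $\leq_{\mathcal{L}^*}$, and for all $e,f\in E(S)$ we have $L^*_e\wedge L^*_f=L^*_{ef}$.
   Context: On $S$, $a\leq_{\mathcal{L}^*}b$ iff for all $x,y\in S^1$, $bx=by$ implies $ax=ay$; $\mathcal{L}^*$ is the associated equivalence ($a\,\mathcal{L}^*\,b$ iff for all $x,y\in S^1$, $ax=ay\Leftrightarrow bx=by$), and $L^*_a$ denotes the $\mathcal{L}^*$-class of $a$. $E(S)$ is the set of idempotents; it is a semilattice when idempotents commute. *)

theory Defs
  imports Main
begin

text \<open>The semigroup S is the carrier type 'a (class semigroup_mult).
  Elements of S^1 are represented as 'a option, None being the adjoined identity.\<close>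

fun rmul1 :: "'a::semigroup_mult \<Rightarrow> 'a option \<Rightarrow> 'a" where
  "rmul1 a None = a"
| "rmul1 a (Some x) = a * x"

definition idem :: "'a::semigroup_mult \<Rightarrow> bool" where
  "idem e \<longleftrightarrow> e * e = e"

definition Lstar_le :: "'a::semigroup_mult \<Rightarrow> 'a \<Rightarrow> bool" where
  "Lstar_le a b \<longleftrightarrow> (\<forall>x y. rmul1 b x = rmul1 b y \<longrightarrow> rmul1 a x = rmul1 a y)"

definition Lstar :: "'a::semigroup_mult \<Rightarrow> 'a \<Rightarrow> bool" where
  "Lstar a b \<longleftrightarrow> (\<forall>x y. rmul1 a x = rmul1 a y \<longleftrightarrow> rmul1 b x = rmul1 b y)"

definition Lclass :: "'a::semigroup_mult \<Rightarrow> 'a set" where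
  "Lclass a = {b. Lstar a b}"

definition cls_le :: "'a::semigroup_mult set \<Rightarrow> 'a set \<Rightarrow> bool" where
  "cls_le A B \<longleftrightarrow> (\<exists>a\<in>A. \<exists>b\<in>B. Lstar_le a b)"

definition idem_classes :: "'a::semigroup_mult set set" where
  "idem_classes = {Lclass e | e. idem e}"

definition idempotents_commute :: "'a::semigroup_mult itself \<Rightarrow> bool" where
  "idempotents_commute _ \<longleftrightarrow> (\<forall>e f::'a. idem e \<and> idem f \<longrightarrow> e * f = f * e)"

definition is_glb_in :: "'b set \<Rightarrow> ('b \<Rightarrow> 'b \<Rightarrow> bool) \<Rightarrow> 'b \<Rightarrow> 'b \<Rightarrow> 'b \<Rightarrow> bool" where
  "is_glb_in P le x y m \<longleftrightarrow> m \<in> P \<and> le m x \<and> le m y \<and>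
     (\<forall>z\<in>P. le z x \<and> le z y \<longrightarrow> le z m)"

definition meet_semilattice_on :: "'b set \<Rightarrow> ('b \<Rightarrow> 'b \<Rightarrow> bool) \<Rightarrow> bool" where
  "meet_semilattice_on P le \<longleftrightarrow>
     (\<forall>x\<in>P. le x x) \<and>
     (\<forall>x\<in>P. \<forall>y\<in>P. le x y \<and> le y x \<longrightarrow> x = y) \<and>
     (\<forall>x\<in>P. \<forall>y\<in>P. \<forall>z\<in>P. le x y \<and> le y z \<longrightarrow> le x z) \<and>
     (\<forall>x\<in>P. \<forall>y\<in>P. \<exists>m. is_glb_in P le x y m)"

end

theory Submission
  imports Defs
begin

lemma Lstar_sym: "Lstar a b \<Longrightarrow> Lstar b a"
  unfolding Lstar_def by blast

lemma Lstar_refl: "Lstar a a"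
  unfolding Lstar_def by blast

lemma Lstar_trans: "Lstar a b \<Longrightarrow> Lstar b c \<Longrightarrow> Lstar a c"
  unfolding Lstar_def by blast

lemma Lstar_le_trans: "Lstar_le a b \<Longrightarrow> Lstar_le b c \<Longrightarrow> Lstar_le a c"
  unfolding Lstar_le_def by blast

lemma Lstar_le_refl: "Lstar_le a a"
  unfolding Lstar_le_def by blast

lemma Lstar_imp_le: "Lstar a b \<Longrightarrow> Lstar_le a b"
  unfolding Lstar_def Lstar_le_def by blast

lemma Lstar_le_antisym: "Lstar_le a b \<Longrightarrow> Lstar_le b a \<Longrightarrow> Lstar a b"
  unfolding Lstar_def Lstar_le_def by blast

lemma Lclass_eq: "Lstar a b \<Longrightarrow> Lclass a = Lclass b"
  unfolding Lclass_def using Lstar_sym Lstar_trans by blast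

lemma in_Lclass: "a \<in> Lclass a"
  unfolding Lclass_def using Lstar_refl by blast

lemma cls_le_Lclass: "cls_le (Lclass a) (Lclass b) \<longleftrightarrow> Lstar_le a b"
proof
  assume "cls_le (Lclass a) (Lclass b)"
  then obtain a' b' where "Lstar a a'" "Lstar b b'" "Lstar_le a' b'"
    unfolding cls_le_def Lclass_def by blast
  then show "Lstar_le a b"
    by (meson Lstar_imp_le Lstar_le_trans Lstar_sym)
next
  assume "Lstar_le a b"
  then show "cls_le (Lclass a) (Lclass b)"
    unfolding cls_le_def using in_Lclass by blast
qed

lemma rmul1_assoc: "rmul1 (a * b) x = a * rmul1 b x"
  by (cases x) (auto simp: mult.assoc)

lemma le_idem: assumes "idem e" shows "Lstar_le a e \<longleftrightarrow> a * e = a"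
proof
  assume h: "Lstar_le a e"
  have "rmul1 e (Some e) = rmul1 e None" using assms by (simp add: idem_def)
  then have "rmul1 a (Some e) = rmul1 a None" using h unfolding Lstar_le_def by blast
  then show "a * e = a" by simp
next
  assume h: "a * e = a"
  show "Lstar_le a e" unfolding Lstar_le_def
  proof (intro allI impI)
    fix x y assume "rmul1 e x = rmul1 e y"
    then have "rmul1 (a * e) x = rmul1 (a * e) y" by (simp add: rmul1_assoc)
    then show "rmul1 a x = rmul1 a y" using h by simp
  qed
qed

theorem lemma4p3:
  assumes "idempotents_commute TYPE('a::semigroup_mult)"
  shows "meet_semilattice_on (idem_classes :: 'a set set) cls_le \<and>
         (\<forall>e f::'a. idem e \<and> idem f \<longrightarrow>
            is_glb_in idem_classes cls_le (Lclass e) (Lclass f) (Lclass (e * f)))"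
proof -
  have comm: "\<And>e f::'a. idem e \<Longrightarrow> idem f \<Longrightarrow> e * f = f * e"
    using assms unfolding idempotents_commute_def by blast
  have glb: "is_glb_in idem_classes cls_le (Lclass e) (Lclass f) (Lclass (e * f))"
    if e: "idem e" and f: "idem f" for e f :: 'a
  proof -
    have ef: "idem (e * f)"
      using e f comm[OF e f] unfolding idem_def
      by (metis mult.assoc)
    have 1: "Lstar_le (e * f) e"
      using le_idem[OF e] comm[OF e f] e unfolding idem_def by (metis mult.assoc)
    have 2: "Lstar_le (e * f) f"
      using le_idem[OF f] f unfolding idem_def by (metis mult.assoc)
    have 3: "cls_le z (Lclass (e * f))"
      if zh: "z \<in> idem_classes" "cls_le z (Lclass e)" "cls_le z (Lclass f)" for z
    proof -
      obtain g where g: "idem g" "z = Lclass g" using zh(1) unfolding idem_classes_def by blast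
      have "g * e = g" "g * f = g" using zh(2,3) g le_idem e f cls_le_Lclass by metis+
      then have "g * (e * f) = g" by (metis mult.assoc)
      then show ?thesis using g le_idem[OF ef] cls_le_Lclass by metis
    qed
    show ?thesis unfolding is_glb_in_def
      using ef 1 2 3 cls_le_Lclass unfolding idem_classes_def by blast
  qed
  have ms: "meet_semilattice_on (idem_classes :: 'a set set) cls_le"
    unfolding meet_semilattice_on_def
  proof (intro conjI ballI impI)
    fix x :: "'a set" assume "x \<in> idem_classes"
    then show "cls_le x x" unfolding idem_classes_def
      using cls_le_Lclass Lstar_le_refl by blast
  next
    fix x y :: "'a set" assume "x \<in> idem_classes" "y \<in> idem_classes" "cls_le x y \<and> cls_le y x"
    then show "x = y" unfolding idem_classes_def
      using cls_le_Lclass Lstar_le_antisym Lclass_eq by blast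
  next
    fix x y z :: "'a set" assume "x \<in> idem_classes" "y \<in> idem_classes" "z \<in> idem_classes"
      "cls_le x y \<and> cls_le y z"
    then show "cls_le x z" unfolding idem_classes_def
      using cls_le_Lclass Lstar_le_trans by blast
  next
    fix x y :: "'a set" assume "x \<in> idem_classes" "y \<in> idem_classes"
    then obtain e f where "idem e" "idem f" "x = Lclass e" "y = Lclass f"
      unfolding idem_classes_def by blast
    then show "\<exists>m. is_glb_in idem_classes cls_le x y m" using glb by blast
  qed
  show ?thesis using ms glb by blast
qed

end
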